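(* Consider an instance of $P|G=\textit{block graph}|C_{\max}$ with $m$ identical machines, jobs $J=\{J_1,\dots,J_n\}$ with processing times $p_j\in\mathbb{N}$, and block conflict graph $G$ with $\omega(G)\le m$ and with $k$ blocks $B_1,\dots,B_k$ listed in the greedy order described in the context. Run the greedy algorithm described in the context. For $j\in\{0,\dots,k\}$ and each machine $M_i$, let $C_j(M_i)$ be the load of $M_i$ after the first $j$ blocks have been processed, let $C_j=\frac1m\sum_{i=1}^m C_j(M_i)$, and let $p_{\max}=\max_l p_l$. Then for every $i\in\{1,\dots,m\}$ and every $j\in\{0,\dots,k\}$, $$C_j(M_i)\le C_j+\max\{C_j,p_{\max}\}.$$
   Context: Scheduling with a conflict graph: jobs $J=\{J_1,\dots,J_n\}$, machines $M=\{M_1,\dots,M_m\}$, and a conflict graph $G=(J,E)$; a schedule is a map $\sigma:J\to M$ such that adjacent jobs are assigned to different machines. On identical machines ($P$) job $J_j$ has processing time $p_j$ on every machine; the load of a machine is the sum of processing times of jobs assigned to it; the makespan $C_{\max}(\sigma)$ is the maximum load, and $C^{OPT}_{\max}$ is the minimum makespan over all schedules. A block graph is a graph in which every maximal 2-connected component is a clique; a block is a maximal clique; a cut-vertex is a vertex in at least two blocks. The block-cut forest $T_G$ has a node for each block and each cut-vertex, with a block node adjacent to a cut-vertex node iff the cut-vertex lies in the block; each component is rooted arbitrarily. Greedy algorithm: list the blocks in the order of a pre-order traversal of (each component of) the rooted block-cut forest. Process the blocks in this order. For the current block $B$, let $L_J$ be the jobs of $B$ sorted by non-increasing processing time and let $L_M$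 be the $|B|$ machines of smallest current load, sorted by non-decreasing current load (ties broken arbitrarily). If $B$ has a parent cut-vertex $u$ in $T_G$ that has already been assigned to some machine $M'$, then: if $M'\in L_M$ remove $M'$ from $L_M$, otherwise remove the last machine of $L_M$; and remove $u$ from $L_J$. Then assign the $i$-th job of $L_J$ to the $i$-th machine of $L_M$ for $i=1,\dots,|L_M|$, updating loads. *)

theory Defs
  imports Complex_Main
begin

definition simple_graph :: "'j set \<Rightarrow> ('j \<Rightarrow> 'j \<Rightarrow> bool) \<Rightarrow> bool" where
  "simple_graph J E \<longleftrightarrow> finite J \<and> (\<forall>a b. E a b \<longrightarrow> a \<in> J \<and> b \<in> J \<and> a \<noteq> b \<and> E b a)"

definition clique :: "('j \<Rightarrow> 'j \<Rightarrow> bool) \<Rightarrow> 'j set \<Rightarrow> bool" where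
  "clique E K \<longleftrightarrow> (\<forall>a\<in>K. \<forall>b\<in>K. a \<noteq> b \<longrightarrow> E a b)"

text \<open>The induced subgraph on S is connected (the empty graph counts as connected).\<close>
definition connected_on :: "('j \<Rightarrow> 'j \<Rightarrow> bool) \<Rightarrow> 'j set \<Rightarrow> bool" where
  "connected_on E S \<longleftrightarrow>
     (\<forall>x\<in>S. \<forall>y\<in>S. (\<lambda>a b. a \<in> S \<and> b \<in> S \<and> E a b)\<^sup>*\<^sup>* x y)"

definition nonseparable :: "('j \<Rightarrow> 'j \<Rightarrow> bool) \<Rightarrow> 'j set \<Rightarrow> bool" where
  "nonseparable E S \<longleftrightarrow> S \<noteq> {} \<and> connected_on E S \<and> (\<forall>v\<in>S. connected_on E (S - {v}))"

text \<open>A block: a maximal nonseparable (2-connected, or K1/K2) vertex set.\<close>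
definition is_block :: "'j set \<Rightarrow> ('j \<Rightarrow> 'j \<Rightarrow> bool) \<Rightarrow> 'j set \<Rightarrow> bool" where
  "is_block J E B \<longleftrightarrow> B \<subseteq> J \<and> nonseparable E B \<and>
     (\<forall>T. B \<subset> T \<and> T \<subseteq> J \<longrightarrow> \<not> nonseparable E T)"

definition block_graph :: "'j set \<Rightarrow> ('j \<Rightarrow> 'j \<Rightarrow> bool) \<Rightarrow> bool" where
  "block_graph J E \<longleftrightarrow> (\<forall>B. is_block J E B \<longrightarrow> clique E B)"

definition cut_vertex :: "'j set \<Rightarrow> ('j \<Rightarrow> 'j \<Rightarrow> bool) \<Rightarrow> 'j \<Rightarrow> bool" where
  "cut_vertex J E v \<longleftrightarrow> (\<exists>B1 B2. is_block J E B1 \<and> is_block J E B2 \<and> B1 \<noteq> B2 \<and> v \<in> B1 \<and> v \<in> B2)"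

definition bc_nodes :: "'j set \<Rightarrow> ('j \<Rightarrow> 'j \<Rightarrow> bool) \<Rightarrow> ('j set + 'j) set" where
  "bc_nodes J E = Inl ` {B. is_block J E B} \<union> Inr ` {v. cut_vertex J E v}"

definition bc_adj :: "'j set \<Rightarrow> ('j \<Rightarrow> 'j \<Rightarrow> bool) \<Rightarrow> ('j set + 'j) \<Rightarrow> ('j set + 'j) \<Rightarrow> bool" where
  "bc_adj J E x y \<longleftrightarrow> (\<exists>B v. (x = Inl B \<and> y = Inr v \<or> x = Inr v \<and> y = Inl B) \<and>
       is_block J E B \<and> cut_vertex J E v \<and> v \<in> B)"

definition parent_rel :: "('n \<Rightarrow> 'n option) \<Rightarrow> 'n \<Rightarrow> 'n \<Rightarrow> bool" where
  "parent_rel par x y \<longleftrightarrow> par x = Some y"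

text \<open>A rooting of the block-cut forest (each component rooted at some node), given by the
  parent map: every forest edge is oriented towards the parent, only forest edges are used,
  and there are no cycles.\<close>
definition is_rooting :: "'j set \<Rightarrow> ('j \<Rightarrow> 'j \<Rightarrow> bool) \<Rightarrow> (('j set + 'j) \<Rightarrow> ('j set + 'j) option) \<Rightarrow> bool" where
  "is_rooting J E par \<longleftrightarrow>
     (\<forall>x y. par x = Some y \<longrightarrow> x \<in> bc_nodes J E \<and> bc_adj J E x y) \<and>
     (\<forall>x y. bc_adj J E x y \<longrightarrow> par x = Some y \<or> par y = Some x) \<and>
     (\<forall>x. \<not> (parent_rel par)\<^sup>+\<^sup>+ x x)"

text \<open>A pre-order traversal of the rooted forest: a listing of all nodes in which the
  subtree of every node (the node and its descendants) occupies a contiguous segment starting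
  at that node.\<close>
definition is_preorder :: "'j set \<Rightarrow> ('j \<Rightarrow> 'j \<Rightarrow> bool) \<Rightarrow> (('j set + 'j) \<Rightarrow> ('j set + 'j) option)
     \<Rightarrow> ('j set + 'j) list \<Rightarrow> bool" where
  "is_preorder J E par ns \<longleftrightarrow> distinct ns \<and> set ns = bc_nodes J E \<and>
     (\<forall>i < length ns. \<exists>c. {l. l < length ns \<and> (parent_rel par)\<^sup>*\<^sup>* (ns ! l) (ns ! i)} = {i..<i + c})"

definition block_order :: "('j set + 'j) list \<Rightarrow> 'j set list" where
  "block_order ns = map projl (filter isl ns)"

definition parent_cut :: "(('j set + 'j) \<Rightarrow> ('j set + 'j) option) \<Rightarrow> 'j set \<Rightarrow> 'j option" where
  "parent_cut par B = (case par (Inl B) of Some (Inr u) \<Rightarrow> Some u | _ \<Rightarrow> None)"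

text \<open>Machines are 0..m-1. A (partial) schedule maps jobs to machines.\<close>
definition load :: "'j set \<Rightarrow> ('j \<Rightarrow> nat) \<Rightarrow> ('j \<rightharpoonup> nat) \<Rightarrow> nat \<Rightarrow> nat" where
  "load J p \<sigma> i = (\<Sum>j\<in>{j\<in>J. \<sigma> j = Some i}. p j)"

text \<open>One step of the greedy algorithm on block B with (possible) parent cut-vertex pc;
  all tie-breaking is arbitrary (existentially chosen lists).\<close>
definition greedy_step :: "'j set \<Rightarrow> ('j \<Rightarrow> nat) \<Rightarrow> nat \<Rightarrow> 'j option \<Rightarrow> 'j set
     \<Rightarrow> ('j \<rightharpoonup> nat) \<Rightarrow> ('j \<rightharpoonup> nat) \<Rightarrow> bool" where
  "greedy_step J p m pc B \<sigma> \<sigma>' \<longleftrightarrow>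
    (\<exists>LJ LM. distinct LJ \<and> set LJ = B \<and> sorted_wrt (\<lambda>a b. p b \<le> p a) LJ \<and>
      distinct LM \<and> set LM \<subseteq> {..<m} \<and> length LM = card B \<and>
      sorted_wrt (\<lambda>a b. load J p \<sigma> a \<le> load J p \<sigma> b) LM \<and>
      (\<forall>a\<in>set LM. \<forall>b\<in>{..<m} - set LM. load J p \<sigma> a \<le> load J p \<sigma> b) \<and>
      (case pc of
         Some u \<Rightarrow> (case \<sigma> u of
             Some M' \<Rightarrow> \<sigma>' = \<sigma>(remove1 u LJ [\<mapsto>]
                               (if M' \<in> set LM then remove1 M' LM else butlast LM))
           | None \<Rightarrow> \<sigma>' = \<sigma>(LJ [\<mapsto>] LM))
       | None \<Rightarrow> \<sigma>' = \<sigma>(LJ [\<mapsto>] LM)))"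

end

theory Submission
  imports Defs
begin

definition Gp :: "nat \<Rightarrow> real \<Rightarrow> (nat \<Rightarrow> real) \<Rightarrow> bool" where
  "Gp m P l \<longleftrightarrow> (\<forall>x<m. (\<Sum>t\<in>{..<m}-{x}. max 0 (l x - P - l t)) \<le> max 0 (l x - P))"

lemma G_final:
  assumes G: "Gp m P l" and nn: "\<forall>t. 0 \<le> l t" and P0: "0 \<le> P" and x: "x < m"
  shows "l x \<le> (\<Sum>i<m. l i) / real m + max ((\<Sum>i<m. l i) / real m) P"
proof -
  define S where "S = (\<Sum>i<m. l i)"
  have S0: "0 \<le> S" unfolding S_def using nn by (simp add: sum_nonneg)
  have C0: "0 \<le> S / real m" using S0 by simp
  show ?thesis
  proof (cases "l x \<le> P")
    case True then show ?thesis using C0 unfolding S_def by linarith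
  next
    case False
    have fin: "finite ({..<m}-{x})" by simp
    have "(\<Sum>t\<in>{..<m}-{x}. l x - P - l t) \<le> (\<Sum>t\<in>{..<m}-{x}. max 0 (l x - P - l t))"
      by (rule sum_mono) simp
    also have "\<dots> \<le> l x - P" using G x False unfolding Gp_def by auto
    finally have A: "(\<Sum>t\<in>{..<m}-{x}. l x - P - l t) \<le> l x - P" .
    have cardx: "card ({..<m}-{x}) = m - 1" using x by simp
    have "(\<Sum>t\<in>{..<m}-{x}. l x - P - l t) = real (m - 1) * (l x - P) - (\<Sum>t\<in>{..<m}-{x}. l t)"
      by (simp add: sum_subtractf cardx)
    moreover have "(\<Sum>t\<in>{..<m}-{x}. l t) = S - l x"
      unfolding S_def using x by (simp add: sum_diff1)
    ultimately have B: "real (m - 1) * (l x - P) - (S - l x) \<le> l x - P" using A by simp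
    have m1: "real (m - 1) = real m - 1" using x by simp
    have B2: "(real m - 1) * l x \<le> S + (real m - 2) * P" using B m1 by (simp add: algebra_simps)
    have mpos: "0 < real m" using x by simp
    show ?thesis
    proof (cases "P \<le> S / real m")
      case True
      have "(real m - 2) * P \<le> (real m - 2) * (S / real m) \<or> m < 2"
      proof (cases "m < 2")
        case False
        then have "0 \<le> real m - 2" by simp
        then show ?thesis using mult_left_mono[OF True] by blast
      qed simp
      moreover
      { assume "m < 2" then have "m = 1" using x by simp
        then have "S = l x" unfolding S_def using x by simp
        then have ?thesis using True \<open>m=1\<close> C0 unfolding S_def by simp }
      moreover
      { assume h: "(real m - 2) * P \<le> (real m - 2) * (S / real m)"
        have "(real m - 1) * l x \<le> S + (real m - 2) * (S / real m)" using B2 h by linarith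
        also have "\<dots> = (real m - 1) * (2 * (S / real m))" using mpos by (simp add: field_simps)
        finally have a: "(real m - 1) * l x \<le> (real m - 1) * (2 * (S / real m))" .
        have "m \<ge> 2 \<or> m = 1" using x by linarith
        then have "l x \<le> 2 * (S / real m)"
        proof
          assume "m \<ge> 2" then have "0 < real m - 1" by simp
          then show ?thesis using mult_left_le_imp_le[OF a] by blast
        next
          assume "m = 1" then show ?thesis unfolding S_def using nn x by simp
        qed
        then have ?thesis using True unfolding S_def by simp }
      ultimately show ?thesis by blast
    next
      case False2: False
      have "(real m - 1) * l x \<le> S + (real m - 2) * P" by (rule B2)
      also have "\<dots> = real m * (S / real m) + (real m - 2) * P" using mpos by simp
      also have "\<dots> \<le> (real m - 1) * (S / real m) + (real m - 1) * P"
      proof -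
        have "real m * (S / real m) + (real m - 2) * P - ((real m - 1) * (S / real m) + (real m - 1) * P) = S / real m - P"
          by (simp add: algebra_simps del: times_divide_eq_right)
        then show ?thesis using False2 by linarith
      qed
      finally have a: "(real m - 1) * l x \<le> (real m - 1) * (S / real m + P)" by (simp add: algebra_simps)
      have "m \<ge> 2 \<or> m = 1" using x by linarith
      then have "l x \<le> S / real m + P"
      proof
        assume "m \<ge> 2" then have "0 < real m - 1" by simp
        then show ?thesis using mult_left_le_imp_le[OF a] by blast
      next
        assume "m = 1" then show ?thesis unfolding S_def using P0 nn x by simp
      qed
      then show ?thesis using False2 unfolding S_def by simp
    qed
  qed
qed

lemma max_arith:
  fixes lx le A q P :: real
  assumes "max 0 (lx - P - le) + A \<le> max 0 (lx - P)" "0 \<le> A" "0 \<le> le" "0 \<le> q"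
  shows "max 0 (lx + q - P - le) + A \<le> max 0 (lx + q - P)"
  using assms by (auto simp: max_def split: if_splits)

lemma G_step:
  assumes G: "Gp m P l" and P0: "0 \<le> P" and nn: "\<forall>t. 0 \<le> l t"
    and dist: "distinct ys" and lenq: "length qs = length ys"
    and qb: "\<forall>q\<in>set qs. 0 \<le> q \<and> q \<le> P"
    and qsort: "sorted_wrt (\<lambda>a b. b \<le> a) qs"
    and ysort: "sorted_wrt (\<lambda>a b. l a \<le> l b) ys"
    and upd_in: "\<forall>k<length ys. l' (ys!k) = l (ys!k) + qs!k"
    and upd_out: "\<forall>i. i \<notin> set ys \<longrightarrow> l' i = l i"
    and exc: "\<forall>t<m. t \<notin> set ys \<longrightarrow> (\<forall>x\<in>set ys. l x \<le> l t) \<or> t = e"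
  shows "Gp m P l'"
  unfolding Gp_def
proof (intro allI impI)
  fix x assume x: "x < m"
  define T where "T = {..<m} - {x}"
  have finT: "finite T" unfolding T_def by simp
  have mono: "\<forall>t. l t \<le> l' t"
  proof
    fix t show "l t \<le> l' t"
    proof (cases "t \<in> set ys")
      case True
      then obtain k where k: "k < length ys" "ys!k = t" by (auto simp: in_set_conv_nth)
      have "0 \<le> qs!k" using qb k lenq by (metis nth_mem)
      then show ?thesis using upd_in k by force
    qed (use upd_out in simp)
  qed
  have Gx: "(\<Sum>t\<in>T. max 0 (l x - P - l t)) \<le> max 0 (l x - P)" using G x unfolding Gp_def T_def by blast
  show "(\<Sum>t\<in>{..<m}-{x}. max 0 (l' x - P - l' t)) \<le> max 0 (l' x - P)"
  proof (cases "x \<in> set ys")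
    case False
    then have "l' x = l x" using upd_out by simp
    then have "(\<Sum>t\<in>T. max 0 (l' x - P - l' t)) \<le> (\<Sum>t\<in>T. max 0 (l x - P - l t))"
      using mono by (intro sum_mono) (smt (verit))
    then show ?thesis using Gx \<open>l' x = l x\<close> unfolding T_def by simp
  next
    case True
    then obtain k where k: "k < length ys" "ys!k = x" by (auto simp: in_set_conv_nth)
    define q where "q = qs!k"
    have q: "0 \<le> q" "q \<le> P" using qb k lenq unfolding q_def by (metis nth_mem)+
    have lx: "l' x = l x + q" using upd_in k unfolding q_def by force
    have claim1: "max 0 (l' x - P - l' t) \<le> max 0 (l x - P - l t)" if t: "t \<in> T" "t \<noteq> e" for t
    proof (cases "l x \<le> l t")
      case True
      then show ?thesis using lx mono q by (smt (verit))
    next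
      case False
      show ?thesis
      proof (cases "t \<in> set ys")
        case True
        then obtain k' where k': "k' < length ys" "ys!k' = t" by (auto simp: in_set_conv_nth)
        have "k' \<noteq> k" using k k' t unfolding T_def by auto
        moreover have "\<not> k < k'"
        proof
          assume "k < k'"
          then have "l (ys!k) \<le> l (ys!k')" using ysort k' by (auto simp: sorted_wrt_iff_nth_less)
          then show False using False k k' by simp
        qed
        ultimately have "k' < k" by simp
        then have "qs!k \<le> qs!k'" using qsort k lenq by (simp add: sorted_wrt_iff_nth_less)
        moreover have "l' t = l t + qs!k'" using upd_in k' by force
        ultimately show ?thesis using lx unfolding q_def by (smt (verit))
      next
        case False2: False
        have "t < m" using t unfolding T_def by simp
        then have "\<forall>y\<in>set ys. l y \<le> l t" using exc False2 t by blast
        then show ?thesis using False \<open>x \<in> set ys\<close> by blast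
      qed
    qed
    show ?thesis
    proof (cases "e \<in> T")
      case False
      have "(\<Sum>t\<in>T. max 0 (l' x - P - l' t)) \<le> (\<Sum>t\<in>T. max 0 (l x - P - l t))"
        using claim1 False by (intro sum_mono) blast
      also have "\<dots> \<le> max 0 (l x - P)" by (rule Gx)
      also have "\<dots> \<le> max 0 (l' x - P)" using lx q by simp
      finally show ?thesis unfolding T_def .
    next
      case True
      define A where "A = (\<Sum>t\<in>T-{e}. max 0 (l x - P - l t))"
      have A0: "0 \<le> A" unfolding A_def by (simp add: sum_nonneg)
      have splitG: "(\<Sum>t\<in>T. max 0 (l x - P - l t)) = max 0 (l x - P - l e) + A"
        unfolding A_def using True finT by (simp add: sum.remove)
      have split': "(\<Sum>t\<in>T. max 0 (l' x - P - l' t)) = max 0 (l' x - P - l' e) + (\<Sum>t\<in>T-{e}. max 0 (l' x - P - l' t))"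
        using True finT by (simp add: sum.remove)
      have "(\<Sum>t\<in>T-{e}. max 0 (l' x - P - l' t)) \<le> A"
        unfolding A_def using claim1 by (intro sum_mono) blast
      moreover have "max 0 (l' x - P - l' e) \<le> max 0 (l x + q - P - l e)"
        using lx mono by (smt (verit))
      moreover have "max 0 (l x + q - P - l e) + A \<le> max 0 (l x + q - P)"
        using max_arith[OF _ A0 _ q(1)] Gx splitG nn by simp
      ultimately show ?thesis using split' lx unfolding T_def by simp
    qed
  qed
qed

lemma map_upds_nth:
  "distinct xs \<Longrightarrow> length xs = length ys \<Longrightarrow> k < length xs \<Longrightarrow> (f(xs[\<mapsto>]ys)) (xs!k) = Some (ys!k)"
proof (induction xs arbitrary: ys k f)
  case Nil then show ?case by simp
next
  case (Cons a as)
  then obtain b bs where ys: "ys = b # bs" by (cases ys) auto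
  show ?case
  proof (cases k)
    case 0 then show ?thesis using Cons.prems ys by simp
  next
    case (Suc k')
    then have "as!k' \<noteq> a" using Cons.prems ys by (metis distinct.simps(2) length_Cons not_less_eq nth_mem)
    then show ?thesis using Cons ys Suc by simp
  qed
qed

lemma load_upd:
  assumes fin: "finite J" and dx: "distinct xs" and dy: "distinct ys" and len: "length xs = length ys"
    and sub: "set xs \<subseteq> J" and fresh: "\<forall>x\<in>set xs. \<sigma> x = None"
  shows "\<forall>k<length ys. load J p (\<sigma>(xs[\<mapsto>]ys)) (ys!k) = load J p \<sigma> (ys!k) + p (xs!k)"
    and "\<forall>i. i \<notin> set ys \<longrightarrow> load J p (\<sigma>(xs[\<mapsto>]ys)) i = load J p \<sigma> i"
proof -
  have inx: "(\<sigma>(xs[\<mapsto>]ys)) j = Some (ys!k')" if "j = xs!k'" "k' < length xs" for j k'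
    using map_upds_nth[OF dx len that(2)] that(1) by simp
  show "\<forall>i. i \<notin> set ys \<longrightarrow> load J p (\<sigma>(xs[\<mapsto>]ys)) i = load J p \<sigma> i"
  proof (intro allI impI)
    fix i assume i: "i \<notin> set ys"
    have "{j\<in>J. (\<sigma>(xs[\<mapsto>]ys)) j = Some i} = {j\<in>J. \<sigma> j = Some i}"
    proof (intro Collect_cong conj_cong refl)
      fix j show "((\<sigma>(xs[\<mapsto>]ys)) j = Some i) = (\<sigma> j = Some i)"
      proof (cases "j \<in> set xs")
        case True
        then obtain k' where "k' < length xs" "j = xs!k'" by (auto simp: in_set_conv_nth)
        then show ?thesis using inx[of j k'] i fresh True len by (auto simp: nth_mem)
      qed simp
    qed
    then show "load J p (\<sigma>(xs[\<mapsto>]ys)) i = load J p \<sigma> i" unfolding load_def by simp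
  qed
  show "\<forall>k<length ys. load J p (\<sigma>(xs[\<mapsto>]ys)) (ys!k) = load J p \<sigma> (ys!k) + p (xs!k)"
  proof (intro allI impI)
    fix k assume k: "k < length ys"
    have xk: "xs!k \<in> J" "\<sigma> (xs!k) = None" using sub fresh k len by (auto simp: nth_mem)
    have "{j\<in>J. (\<sigma>(xs[\<mapsto>]ys)) j = Some (ys!k)} = insert (xs!k) {j\<in>J. \<sigma> j = Some (ys!k)}"
    proof (intro set_eqI iffI)
      fix j assume j: "j \<in> {j\<in>J. (\<sigma>(xs[\<mapsto>]ys)) j = Some (ys!k)}"
      show "j \<in> insert (xs!k) {j\<in>J. \<sigma> j = Some (ys!k)}"
      proof (cases "j \<in> set xs")
        case True
        then obtain k' where k': "k' < length xs" "j = xs!k'" by (auto simp: in_set_conv_nth)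
        then have "ys!k' = ys!k" using inx[of j k'] j by simp
        then have "k' = k" using dy k k' len by (simp add: nth_eq_iff_index_eq)
        then show ?thesis using k' by simp
      next
        case False then show ?thesis using j by simp
      qed
    next
      fix j assume j: "j \<in> insert (xs!k) {j\<in>J. \<sigma> j = Some (ys!k)}"
      show "j \<in> {j\<in>J. (\<sigma>(xs[\<mapsto>]ys)) j = Some (ys!k)}"
      proof (cases "j = xs!k")
        case True then show ?thesis using inx[of j k] k len xk by simp
      next
        case False
        then have "j \<in> J" "\<sigma> j = Some (ys!k)" using j by auto
        moreover have "j \<notin> set xs" using fresh \<open>\<sigma> j = Some (ys!k)\<close> by auto
        ultimately show ?thesis by simp
      qed
    qed
    moreover have "xs!k \<notin> {j\<in>J. \<sigma> j = Some (ys!k)}" using xk by simp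
    moreover have "finite {j\<in>J. \<sigma> j = Some (ys!k)}" using fin by simp
    ultimately show "load J p (\<sigma>(xs[\<mapsto>]ys)) (ys!k) = load J p \<sigma> (ys!k) + p (xs!k)"
      unfolding load_def by simp
  qed
qed

lemma sorted_remove1: "distinct xs \<Longrightarrow> sorted_wrt R xs \<Longrightarrow> sorted_wrt R (remove1 x xs)"
  by (simp add: distinct_remove1_removeAll removeAll_filter_not_eq sorted_wrt_filter)

lemma sorted_butlast: "sorted_wrt R xs \<Longrightarrow> sorted_wrt R (butlast xs)"
  by (simp add: butlast_conv_take)

lemma bo_blocks:
  assumes pre: "is_preorder J E par ns" and B: "B \<in> set (block_order ns)"
  shows "is_block J E B"
proof -
  from B obtain x where x: "x \<in> set ns" "isl x" "B = projl x" unfolding block_order_def by auto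
  then have "x = Inl B" by (cases x) auto
  then have "Inl B \<in> bc_nodes J E" using x pre unfolding is_preorder_def by simp
  then show ?thesis unfolding bc_nodes_def by auto
qed

lemma bo_distinct:
  assumes pre: "is_preorder J E par ns"
  shows "distinct (block_order ns)"
proof -
  have "inj_on projl (set (filter isl ns))"
    by (rule inj_onI) (auto, metis sum.collapse(1))
  then show ?thesis using pre unfolding block_order_def is_preorder_def by (simp add: distinct_map)
qed

lemma bo_order:
  assumes pre: "is_preorder J E par ns" and jj: "j' < j" "j < length (block_order ns)"
  shows "\<not> (parent_rel par)\<^sup>*\<^sup>* (Inl (block_order ns ! j')) (Inl (block_order ns ! j))"
proof -
  let ?R = "\<lambda>x y. \<not> (parent_rel par)\<^sup>*\<^sup>* x y"
  have "sorted_wrt ?R ns"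
    unfolding sorted_wrt_iff_nth_less
  proof (intro allI impI)
    fix a b assume ab: "a < b" "b < length ns"
    have "\<forall>i<length ns. \<exists>c. {l. l < length ns \<and> (parent_rel par)\<^sup>*\<^sup>* (ns ! l) (ns ! i)} = {i..<i + c}"
      using pre unfolding is_preorder_def by simp
    then obtain c where c: "{l. l < length ns \<and> (parent_rel par)\<^sup>*\<^sup>* (ns ! l) (ns ! b)} = {b..<b + c}"
      using ab(2) by blast
    show "?R (ns!a) (ns!b)"
    proof
      assume "(parent_rel par)\<^sup>*\<^sup>* (ns ! a) (ns ! b)"
      then have "a \<in> {l. l < length ns \<and> (parent_rel par)\<^sup>*\<^sup>* (ns ! l) (ns ! b)}" using ab by simp
      then have "a \<in> {b..<b + c}" using c by simp
      then show False using ab by simp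
    qed
  qed
  then have "sorted_wrt ?R (filter isl ns)" by (rule sorted_wrt_filter)
  then have "sorted_wrt (\<lambda>x y. ?R (Inl (projl x)) (Inl (projl y))) (filter isl ns)"
  proof (rule sorted_wrt_mono_rel[rotated])
    fix x y assume "x \<in> set (filter isl ns)" "y \<in> set (filter isl ns)" "?R x y"
    then show "?R (Inl (projl x)) (Inl (projl y))" by simp
  qed
  then have "sorted_wrt (\<lambda>B B'. ?R (Inl B) (Inl B')) (block_order ns)"
    unfolding block_order_def by (simp add: sorted_wrt_map)
  then show ?thesis using jj by (simp add: sorted_wrt_iff_nth_less)
qed

lemma parent_in:
  assumes root: "is_rooting J E par" and pc: "parent_cut par B = Some u"
  shows "u \<in> B"
proof -
  have "par (Inl B) = Some (Inr u)" using pc unfolding parent_cut_def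
    by (auto split: option.splits sum.splits)
  then have "bc_adj J E (Inl B) (Inr u)" using root unfolding is_rooting_def by blast
  then show ?thesis unfolding bc_adj_def by auto
qed

lemma key_overlap:
  assumes root: "is_rooting J E par" and pre: "is_preorder J E par ns"
    and jj: "j' < j" "j < length (block_order ns)"
    and v: "v \<in> block_order ns ! j'" "v \<in> block_order ns ! j"
  shows "parent_cut par (block_order ns ! j) = Some v"
proof -
  let ?Bs = "block_order ns"
  define B1 B2 where "B1 = ?Bs ! j'" and "B2 = ?Bs ! j"
  have b1: "is_block J E B1" and b2: "is_block J E B2"
    using bo_blocks[OF pre] jj unfolding B1_def B2_def by auto
  have ne: "B1 \<noteq> B2" using bo_distinct[OF pre] jj unfolding B1_def B2_def
    by (simp add: nth_eq_iff_index_eq)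
  have v1: "v \<in> B1" and v2: "v \<in> B2" using v unfolding B1_def B2_def by auto
  have cv: "cut_vertex J E v" unfolding cut_vertex_def using b1 b2 ne v1 v2 by blast
  have a1: "bc_adj J E (Inl B1) (Inr v)" unfolding bc_adj_def using b1 cv v1 by blast
  have a2: "bc_adj J E (Inl B2) (Inr v)" unfolding bc_adj_def using b2 cv v2 by blast
  have o1: "par (Inl B1) = Some (Inr v) \<or> par (Inr v) = Some (Inl B1)"
    using root a1 unfolding is_rooting_def by blast
  have o2: "par (Inl B2) = Some (Inr v) \<or> par (Inr v) = Some (Inl B2)"
    using root a2 unfolding is_rooting_def by blast
  show ?thesis
  proof (cases "par (Inl B2) = Some (Inr v)")
    case True then show ?thesis unfolding parent_cut_def B2_def[symmetric] by simp
  next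
    case False
    then have p2: "par (Inr v) = Some (Inl B2)" using o2 by blast
    then have p1: "par (Inl B1) = Some (Inr v)" using o1 ne by auto
    have "(parent_rel par)\<^sup>*\<^sup>* (Inl B1) (Inl B2)"
      using p1 p2 unfolding parent_rel_def
      by (meson rtranclp.rtrancl_into_rtrancl rtranclp.rtrancl_refl)
    then show ?thesis using bo_order[OF pre jj] unfolding B1_def B2_def by blast
  qed
qed


lemma not_butlast_last: "xs \<noteq> [] \<Longrightarrow> x \<in> set xs \<Longrightarrow> x \<notin> set (butlast xs) \<Longrightarrow> x = last xs"
  by (induct xs) (auto split: if_splits)

lemma step_core:
  assumes G: "Gp m P (\<lambda>i. real (load J p \<sigma> i))" and PM: "P = real (Max (p ` J))"
    and fin: "finite J" and sub: "set xs \<subseteq> J" and dx: "distinct xs" and dy: "distinct ys"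
    and len: "length xs = length ys"
    and xsort: "sorted_wrt (\<lambda>a b. p b \<le> p a) xs"
    and ysort: "sorted_wrt (\<lambda>a b. load J p \<sigma> a \<le> load J p \<sigma> b) ys"
    and fresh: "\<forall>x\<in>set xs. \<sigma> x = None"
    and exc: "\<forall>t<m. t \<notin> set ys \<longrightarrow> (\<forall>x\<in>set ys. load J p \<sigma> x \<le> load J p \<sigma> t) \<or> t = e"
  shows "Gp m P (\<lambda>i. real (load J p (\<sigma>(xs[\<mapsto>]ys)) i))"
proof (rule G_step[where ys = ys and qs = "map (\<lambda>x. real (p x)) xs" and e = e])
  show "Gp m P (\<lambda>i. real (load J p \<sigma> i))" by (rule G)
  show "0 \<le> P" using PM by simp
  show "\<forall>t. 0 \<le> real (load J p \<sigma> t)" by simp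
  show "distinct ys" by (rule dy)
  show "length (map (\<lambda>x. real (p x)) xs) = length ys" using len by simp
  show "\<forall>q\<in>set (map (\<lambda>x. real (p x)) xs). 0 \<le> q \<and> q \<le> P"
  proof
    fix q assume "q \<in> set (map (\<lambda>x. real (p x)) xs)"
    then obtain x where x: "x \<in> set xs" "q = real (p x)" by auto
    have "p x \<le> Max (p ` J)" using fin x sub by (intro Max_ge) auto
    then show "0 \<le> q \<and> q \<le> P" using x PM by simp
  qed
  show "sorted_wrt (\<lambda>a b. b \<le> a) (map (\<lambda>x. real (p x)) xs)"
    using xsort by (simp add: sorted_wrt_map)
  show "sorted_wrt (\<lambda>a b. real (load J p \<sigma> a) \<le> real (load J p \<sigma> b)) ys"
    using ysort by simp
  have lu: "\<forall>k<length ys. load J p (\<sigma>(xs[\<mapsto>]ys)) (ys!k) = load J p \<sigma> (ys!k) + p (xs!k)"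
    "\<forall>i. i \<notin> set ys \<longrightarrow> load J p (\<sigma>(xs[\<mapsto>]ys)) i = load J p \<sigma> i"
    using load_upd[OF fin dx dy len sub fresh] by blast+
  show "\<forall>k<length ys. real (load J p (\<sigma>(xs[\<mapsto>]ys)) (ys!k)) = real (load J p \<sigma> (ys!k)) + map (\<lambda>x. real (p x)) xs ! k"
    using lu(1) len by simp
  show "\<forall>i. i \<notin> set ys \<longrightarrow> real (load J p (\<sigma>(xs[\<mapsto>]ys)) i) = real (load J p \<sigma> i)"
    using lu(2) by simp
  show "\<forall>t<m. t \<notin> set ys \<longrightarrow> (\<forall>x\<in>set ys. real (load J p \<sigma> x) \<le> real (load J p \<sigma> t)) \<or> t = e"
    using exc by simp
qed

theorem lemma1:
  fixes J :: "'j set" and E :: "'j \<Rightarrow> 'j \<Rightarrow> bool" and p :: "'j \<Rightarrow> nat" and m :: nat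
    and par :: "('j set + 'j) \<Rightarrow> ('j set + 'j) option" and ns :: "('j set + 'j) list"
    and Bs :: "'j set list" and \<sigma>s :: "('j \<rightharpoonup> nat) list"
  assumes graph: "simple_graph J E"
    and blk: "block_graph J E"
    and omega: "\<forall>K. K \<subseteq> J \<and> clique E K \<longrightarrow> card K \<le> m"
    and root: "is_rooting J E par"
    and pre: "is_preorder J E par ns"
    and Bs: "Bs = block_order ns"
    and len: "length \<sigma>s = length Bs + 1"
    and init: "\<sigma>s ! 0 = Map.empty"
    and run: "\<forall>j < length Bs. greedy_step J p m (parent_cut par (Bs ! j)) (Bs ! j) (\<sigma>s ! j) (\<sigma>s ! Suc j)"
  shows "\<forall>i < m. \<forall>j \<le> length Bs.
           real (load J p (\<sigma>s ! j) i)
             \<le> (\<Sum>i'<m. real (load J p (\<sigma>s ! j) i')) / real m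
               + max ((\<Sum>i'<m. real (load J p (\<sigma>s ! j) i')) / real m) (real (Max (p ` J)))"
proof -
  define P where "P = real (Max (p ` J))"
  have fin: "finite J" using graph unfolding simple_graph_def by simp
  have inv: "Gp m P (\<lambda>i. real (load J p (\<sigma>s ! j) i)) \<and> (\<forall>x. (\<sigma>s ! j) x \<noteq> None \<longrightarrow> (\<exists>j'<j. x \<in> Bs ! j'))"
    if "j \<le> length Bs" for j
    using that
  proof (induction j)
    case 0
    have "load J p (\<sigma>s ! 0) i = 0" for i unfolding load_def init by simp
    moreover have "max 0 (- P) = 0" unfolding P_def by simp
    ultimately show ?case unfolding Gp_def using init by simp
  next
    case (Suc j)
    then have j: "j < length Bs" by simp
    have IH: "Gp m P (\<lambda>i. real (load J p (\<sigma>s ! j) i))"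
      "\<forall>x. (\<sigma>s ! j) x \<noteq> None \<longrightarrow> (\<exists>j'<j. x \<in> Bs ! j')" using Suc by auto
    define B where "B = Bs ! j"
    define \<sigma> where "\<sigma> = \<sigma>s ! j"
    define \<sigma>' where "\<sigma>' = \<sigma>s ! Suc j"
    define ld where "ld = load J p \<sigma>"
    have blockB: "is_block J E B" using bo_blocks[OF pre] j Bs unfolding B_def by simp
    then have BJ: "B \<subseteq> J" unfolding is_block_def by simp
    have finB: "finite B" using BJ fin finite_subset by blast
    have ov: "\<And>x j'. j' < j \<Longrightarrow> x \<in> Bs ! j' \<Longrightarrow> x \<in> B \<Longrightarrow> parent_cut par B = Some x"
      using key_overlap[OF root pre] j Bs unfolding B_def by blast
    have gs: "greedy_step J p m (parent_cut par B) B \<sigma> \<sigma>'"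
      using run j unfolding B_def \<sigma>_def \<sigma>'_def by blast
    then obtain LJ LM where LJ: "distinct LJ" "set LJ = B" "sorted_wrt (\<lambda>a b. p b \<le> p a) LJ"
      and LM: "distinct LM" "set LM \<subseteq> {..<m}" "length LM = card B"
        "sorted_wrt (\<lambda>a b. ld a \<le> ld b) LM"
        "\<forall>a\<in>set LM. \<forall>b\<in>{..<m} - set LM. ld a \<le> ld b"
      and cs: "case parent_cut par B of
         Some u \<Rightarrow> (case \<sigma> u of
             Some M' \<Rightarrow> \<sigma>' = \<sigma>(remove1 u LJ [\<mapsto>]
                               (if M' \<in> set LM then remove1 M' LM else butlast LM))
           | None \<Rightarrow> \<sigma>' = \<sigma>(LJ [\<mapsto>] LM))
       | None \<Rightarrow> \<sigma>' = \<sigma>(LJ [\<mapsto>] LM)"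
      unfolding greedy_step_def ld_def by blast
    have lenLJ: "length LJ = card B" using LJ distinct_card by fastforce
    have outside: "\<forall>t<m. t \<notin> set LM \<longrightarrow> (\<forall>x\<in>set LM. ld x \<le> ld t)" using LM(5) by blast
    have "\<exists>xs ys e. \<sigma>' = \<sigma>(xs[\<mapsto>]ys) \<and> set xs \<subseteq> B \<and> distinct xs \<and> distinct ys \<and> length xs = length ys
       \<and> sorted_wrt (\<lambda>a b. p b \<le> p a) xs \<and> sorted_wrt (\<lambda>a b. ld a \<le> ld b) ys
       \<and> (\<forall>x\<in>set xs. \<sigma> x = None)
       \<and> (\<forall>t<m. t \<notin> set ys \<longrightarrow> (\<forall>x\<in>set ys. ld x \<le> ld t) \<or> t = e)"
    proof (cases "parent_cut par B")
      case None
      have fr: "\<forall>x\<in>set LJ. \<sigma> x = None"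
      proof (intro ballI)
        fix x assume "x \<in> set LJ"
        show "\<sigma> x = None"
        proof (rule ccontr)
          assume "\<sigma> x \<noteq> None"
          then obtain j' where "j' < j" "x \<in> Bs ! j'" using IH(2) unfolding \<sigma>_def by blast
          then show False using ov \<open>x \<in> set LJ\<close> LJ(2) None by fastforce
        qed
      qed
      show ?thesis using None cs LJ LM lenLJ fr outside by (intro exI[of _ LJ] exI[of _ LM] exI[of _ 0]) auto
    next
      case (Some u)
      have uB: "u \<in> B" using parent_in[OF root Some] .
      show ?thesis
      proof (cases "\<sigma> u")
        case None
        have fr: "\<forall>x\<in>set LJ. \<sigma> x = None"
        proof (intro ballI)
          fix x assume "x \<in> set LJ"
          show "\<sigma> x = None"
          proof (rule ccontr)
            assume "\<sigma> x \<noteq> None"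
            then obtain j' where "j' < j" "x \<in> Bs ! j'" using IH(2) unfolding \<sigma>_def by blast
            then have "x = u" using ov \<open>x \<in> set LJ\<close> LJ(2) Some by fastforce
            then show False using None \<open>\<sigma> x \<noteq> None\<close> by simp
          qed
        qed
        show ?thesis using None Some cs LJ LM lenLJ fr outside by (intro exI[of _ LJ] exI[of _ LM] exI[of _ 0]) auto
      next
        case (Some M')
        note pcu = \<open>parent_cut par B = Some u\<close>
        define xs where "xs = remove1 u LJ"
        define ys where "ys = (if M' \<in> set LM then remove1 M' LM else butlast LM)"
        have s': "\<sigma>' = \<sigma>(xs[\<mapsto>]ys)" using cs pcu Some unfolding xs_def ys_def by simp
        have setxs: "set xs = B - {u}" using LJ unfolding xs_def by simp
        have dxs: "distinct xs" using LJ unfolding xs_def by simp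
        have lxs: "length xs = card B - 1" using LJ uB lenLJ unfolding xs_def by (simp add: length_remove1)
        have LMne: "LM \<noteq> []" using LM(3) uB finB by (auto simp: card_gt_0_iff)
        have dys: "distinct ys" using LM(1) unfolding ys_def by (simp add: distinct_butlast)
        have lys: "length ys = card B - 1" using LM(3) unfolding ys_def by (simp add: length_remove1)
        have sxs: "sorted_wrt (\<lambda>a b. p b \<le> p a) xs" using LJ unfolding xs_def by (simp add: sorted_remove1)
        have sys: "sorted_wrt (\<lambda>a b. ld a \<le> ld b) ys" using LM(1,4) unfolding ys_def
          by (simp add: sorted_remove1 sorted_butlast)
        have fr: "\<forall>x\<in>set xs. \<sigma> x = None"
        proof (intro ballI)
          fix x assume xin: "x \<in> set xs"
          show "\<sigma> x = None"
          proof (rule ccontr)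
            assume "\<sigma> x \<noteq> None"
            then obtain j' where "j' < j" "x \<in> Bs ! j'" using IH(2) unfolding \<sigma>_def by blast
            then have "x = u" using ov xin setxs pcu by fastforce
            then show False using xin setxs by simp
          qed
        qed
        have ex: "\<forall>t<m. t \<notin> set ys \<longrightarrow> (\<forall>x\<in>set ys. ld x \<le> ld t) \<or> t = M'"
        proof (intro allI impI)
          fix t assume t: "t < m" "t \<notin> set ys"
          show "(\<forall>x\<in>set ys. ld x \<le> ld t) \<or> t = M'"
          proof (cases "t \<in> set LM")
            case False
            have "set ys \<subseteq> set LM" unfolding ys_def using LM(1) by (auto dest: in_set_butlastD)
            then show ?thesis using outside t False by blast
          next
            case True
            show ?thesis
            proof (cases "M' \<in> set LM")
              case True
              then show ?thesis using t \<open>t \<in> set LM\<close> LM(1) unfolding ys_def by auto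
            next
              case False
              have "LM = butlast LM @ [last LM]" using LMne by simp
              then have sa: "sorted_wrt (\<lambda>a b. ld a \<le> ld b) (butlast LM @ [last LM])" using LM(4) by simp
              have "t = last LM" using True t(2) False LMne unfolding ys_def
                using not_butlast_last[OF LMne True] by simp
              then show ?thesis using sa False unfolding ys_def sorted_wrt_append by simp
            qed
          qed
        qed
        show ?thesis using s' setxs dxs dys lxs lys sxs sys fr ex
          by (intro exI[of _ xs] exI[of _ ys] exI[of _ M']) auto
      qed
    qed
    then obtain xs ys e where X: "\<sigma>' = \<sigma>(xs[\<mapsto>]ys)" "set xs \<subseteq> B" "distinct xs" "distinct ys" "length xs = length ys"
       "sorted_wrt (\<lambda>a b. p b \<le> p a) xs" "sorted_wrt (\<lambda>a b. ld a \<le> ld b) ys"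
       "\<forall>x\<in>set xs. \<sigma> x = None"
       "\<forall>t<m. t \<notin> set ys \<longrightarrow> (\<forall>x\<in>set ys. ld x \<le> ld t) \<or> t = e" by blast
    have G': "Gp m P (\<lambda>i. real (load J p \<sigma>' i))"
      unfolding X(1)
      by (rule step_core[OF IH(1)[folded \<sigma>_def] P_def fin _ X(3) X(4) X(5) X(6) _ X(8), of e])
         (use X(2) BJ X(7) X(9) in \<open>auto simp: ld_def\<close>)
    have D': "\<forall>x. \<sigma>' x \<noteq> None \<longrightarrow> (\<exists>j'<Suc j. x \<in> Bs ! j')"
    proof (intro allI impI)
      fix x assume "\<sigma>' x \<noteq> None"
      then have "x \<in> set xs \<or> \<sigma> x \<noteq> None" unfolding X(1) using X(5)
        by (metis map_upds_apply_nontin)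
      then show "\<exists>j'<Suc j. x \<in> Bs ! j'"
      proof
        assume "x \<in> set xs" then have "x \<in> Bs ! j" using X(2) unfolding B_def by blast
        then show ?thesis by blast
      next
        assume "\<sigma> x \<noteq> None" then show ?thesis using IH(2) unfolding \<sigma>_def
          by (meson less_SucI)
      qed
    qed
    show ?case using G' D' unfolding \<sigma>'_def by simp
  qed
  show ?thesis
  proof (intro allI impI)
    fix i j assume i: "i < m" and j: "j \<le> length Bs"
    have "Gp m P (\<lambda>i. real (load J p (\<sigma>s ! j) i))" using inv[OF j] by blast
    from G_final[OF this _ _ i] show "real (load J p (\<sigma>s ! j) i)
             \<le> (\<Sum>i'<m. real (load J p (\<sigma>s ! j) i')) / real m
               + max ((\<Sum>i'<m. real (load J p (\<sigma>s ! j) i')) / real m) (real (Max (p ` J)))"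
      unfolding P_def by simp
  qed
qed

end
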